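(* Consider a CRN having at least one conservation law with all entries strictly positive, and let $\{\mathbf x_i\}$ denote its conservation laws. Let $A=(\mathcal S_A,\mathcal R_A)$ be a MAS with core set $A_C$ such that $|\mathcal S_A|=|A_C|+1$, and let $T$ be its FWMC partition. Then the species-productive cone of $A$ equals its partition-productive cone: $\mathcal P(A)=\mathcal Q(T)$.
   Context: A chemical reaction network (CRN) consists of a finite species set $\mathcal S$ and a finite set $\mathcal R$ of reactions; each reaction $r$ is written $r^-\to r^+$ with input complex $r^-\in\mathbb Z_{\ge0}^{\mathcal S}$ and output complex $r^+\in\mathbb Z_{\ge0}^{\mathcal S}$. The input and output matrices $\mathbb S^-,\mathbb S^+$ have columns $r^-$, resp. $r^+$; the stoichiometric matrix is $\mathbb S=\mathbb S^+-\mathbb S^-$. A conservation law is a vector $\mathbf x\in\mathbb R^{\mathcal S}$ with $\mathbf x^T\mathbb S=\mathbf0$. $(\mathbb A)_M^N$ denotes the submatrix with rows in $M$ and columns in $N$. $\mathbf v\gg\mathbf 0$ means all entries $>0$; $\mathbf v>\mathbf 0$ means all entries $\ge0$ and $\mathbf v\ne\mathbf 0$. A motif $(\mathcal M,\mathcal R')$ ($\mathcal M\subseteq\mathcal S,\mathcal R'\subseteq\mathcal R$) is exclusively autocatalytic if: (i) some $\mathbf v\gg\mathbf0$ in $\mathbb R^{\mathcal R'}$ has $(\mathbb S)_{\mathcal M}^{\mathcal R'}\mathbf v\gg\mathbf 0$; (ii) every row and (iii) every column of $(\mathbb S^-)_{\mathcal M}^{\mathcal R'}$ is semi-positive. An autocatalytic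 core is an exclusively autocatalytic motif $(A_C,\mathcal R_A)$ no proper sub-motif ($\mathcal M'\subseteq A_C$, $\mathcal R''\subseteq\mathcal R_A$) of which is exclusively autocatalytic. The minimal autocatalytic subnetwork (MAS) $A=(\mathcal S_A,\mathcal R_A)$ of a core $(A_C,\mathcal R_A)$ has reaction set $\mathcal R_A$ and species set $\mathcal S_A$ consisting of all species occurring in some input or output complex of a reaction in $\mathcal R_A$; each MAS is assumed to have a unique core. Put $\overline{\mathbb S}=(\mathbb S)_{\mathcal S_A}^{\mathcal R_A}$ and $\overline{\mathbb S}_C=(\mathbb S)_{A_C}^{\mathcal R_A}$ (a square invertible matrix). The species-productive cone is $\mathcal P(A)=\{\overline{\mathbb S}\,\overline{\mathbb S}_C^{-1}\mathbf u:\mathbf u\ge\mathbf0\}\subseteq\mathbb R^{\mathcal S_A}$. FWMC partition $T=\{T_F,T_W,T_{M/C},T_C\}$ of $\mathcal S_A$: the food set $T_F$ consists of species whose row in $\overline{\mathbb S}$ has all entries $\le0$; the waste set $T_W$ those whose row has all entries $\ge0$; the member set those whose row has both positive and negative entries; $T_C=A_C$ (contained in the member set); $T_{M/C}$ = member set minus $A_C$. Partition-productive cone: with $e_i$ the standard basis vectors of $\mathbb R^{\mathcal S_A}$, let $\mathcal B_T=\{-e_f:f\in T_F\}\cup\{e_w:w\in T_W\}\cup\{-e_m,e_m:m\in T_{M/C}\}\cup\{e_c:c\in T_C\}$, and $\mathcal Q(T)=\mathrm{cone}(\mathcal B_T)\cap\{\mathbf y\in\mathbb R^{\mathcal S_A}:\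 \mathbf x_i|_{\mathcal S_A}\cdot\mathbf y=0\ \text{for all } i\}$, where $\mathbf x_i|_{\mathcal S_A}$ is the restriction of $\mathbf x_i$ to the coordinates in $\mathcal S_A$. *)

theory Defs
  imports Complex_Main
begin

text \<open>A CRN over a finite species type 's and a finite reaction type 'r is given by
  its input matrix Sm and output matrix Sp (entries: stoichiometric coefficients).\<close>

definition stoich :: "('s \<Rightarrow> 'r \<Rightarrow> nat) \<Rightarrow> ('s \<Rightarrow> 'r \<Rightarrow> nat) \<Rightarrow> 's \<Rightarrow> 'r \<Rightarrow> real" where
  "stoich Sm Sp s r = real (Sp s r) - real (Sm s r)"

definition conservation_law ::
  "('s::finite \<Rightarrow> 'r \<Rightarrow> nat) \<Rightarrow> ('s \<Rightarrow> 'r \<Rightarrow> nat) \<Rightarrow> ('s \<Rightarrow> real) \<Rightarrow> bool" where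
  "conservation_law Sm Sp x \<longleftrightarrow> (\<forall>r. (\<Sum>s\<in>UNIV. x s * stoich Sm Sp s r) = 0)"

definition excl_autocatalytic ::
  "('s \<Rightarrow> 'r \<Rightarrow> nat) \<Rightarrow> ('s \<Rightarrow> 'r \<Rightarrow> nat) \<Rightarrow> 's set \<Rightarrow> 'r set \<Rightarrow> bool" where
  "excl_autocatalytic Sm Sp M R' \<longleftrightarrow>
     M \<noteq> {} \<and> R' \<noteq> {} \<and>
     (\<exists>v::'r \<Rightarrow> real. (\<forall>r\<in>R'. v r > 0) \<and>
        (\<forall>m\<in>M. (\<Sum>r\<in>R'. stoich Sm Sp m r * v r) > 0)) \<and>
     (\<forall>m\<in>M. \<exists>r\<in>R'. Sm m r > 0) \<and>
     (\<forall>r\<in>R'. \<exists>m\<in>M. Sm m r > 0)"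

definition autocatalytic_core ::
  "('s \<Rightarrow> 'r \<Rightarrow> nat) \<Rightarrow> ('s \<Rightarrow> 'r \<Rightarrow> nat) \<Rightarrow> 's set \<Rightarrow> 'r set \<Rightarrow> bool" where
  "autocatalytic_core Sm Sp M R' \<longleftrightarrow>
     excl_autocatalytic Sm Sp M R' \<and>
     (\<forall>M' R''. M' \<subseteq> M \<and> R'' \<subseteq> R' \<and> (M', R'') \<noteq> (M, R') \<longrightarrow>
        \<not> excl_autocatalytic Sm Sp M' R'')"

definition mas_species ::
  "('s \<Rightarrow> 'r \<Rightarrow> nat) \<Rightarrow> ('s \<Rightarrow> 'r \<Rightarrow> nat) \<Rightarrow> 'r set \<Rightarrow> 's set" where
  "mas_species Sm Sp RA = {s. \<exists>r\<in>RA. Sm s r > 0 \<or> Sp s r > 0}"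

definition food_set where
  "food_set Sm Sp RA = {s \<in> mas_species Sm Sp RA. \<forall>r\<in>RA. stoich Sm Sp s r \<le> 0}"

definition waste_set where
  "waste_set Sm Sp RA = {s \<in> mas_species Sm Sp RA. \<forall>r\<in>RA. stoich Sm Sp s r \<ge> 0}"

definition member_set where
  "member_set Sm Sp RA = {s \<in> mas_species Sm Sp RA.
      (\<exists>r\<in>RA. stoich Sm Sp s r > 0) \<and> (\<exists>r\<in>RA. stoich Sm Sp s r < 0)}"

text \<open>Vectors in R^{S_A} are represented as functions 's => real vanishing outside S_A.\<close>
definition unit_vec :: "'s \<Rightarrow> 's \<Rightarrow> real" where
  "unit_vec i = (\<lambda>s. if s = i then 1 else 0)"

definition cone_gen :: "('s \<Rightarrow> real) set \<Rightarrow> ('s \<Rightarrow> real) set" where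
  "cone_gen B = {y. \<exists>c. (\<forall>b\<in>B. c b \<ge> 0) \<and> y = (\<lambda>s. \<Sum>b\<in>B. c b * b s)}"

definition partition_basis ::
  "('s \<Rightarrow> 'r \<Rightarrow> nat) \<Rightarrow> ('s \<Rightarrow> 'r \<Rightarrow> nat) \<Rightarrow> 's set \<Rightarrow> 'r set \<Rightarrow> ('s \<Rightarrow> real) set" where
  "partition_basis Sm Sp AC RA =
     {- unit_vec f | f. f \<in> food_set Sm Sp RA} \<union>
     {unit_vec w | w. w \<in> waste_set Sm Sp RA} \<union>
     {- unit_vec m | m. m \<in> member_set Sm Sp RA - AC} \<union>
     {unit_vec m | m. m \<in> member_set Sm Sp RA - AC} \<union>
     {unit_vec c | c. c \<in> AC}"

definition partition_productive_cone ::
  "('s::finite \<Rightarrow> 'r \<Rightarrow> nat) \<Rightarrow> ('s \<Rightarrow> 'r \<Rightarrow> nat) \<Rightarrow> 's set \<Rightarrow> 'r set \<Rightarrow> ('s \<Rightarrow> real) set" where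
  "partition_productive_cone Sm Sp AC RA =
     cone_gen (partition_basis Sm Sp AC RA) \<inter>
     {y. \<forall>x. conservation_law Sm Sp x \<longrightarrow>
            (\<Sum>s\<in>mas_species Sm Sp RA. x s * y s) = 0}"

text \<open>Species-productive cone P(A) = { Sbar Sbar_C^{-1} u | u >= 0 }, written as
  { Sbar w | Sbar_C w >= 0 }, which is the same set since Sbar_C is invertible.\<close>
definition species_productive_cone ::
  "('s \<Rightarrow> 'r::finite \<Rightarrow> nat) \<Rightarrow> ('s \<Rightarrow> 'r \<Rightarrow> nat) \<Rightarrow> 's set \<Rightarrow> 'r set \<Rightarrow> ('s \<Rightarrow> real) set" where
  "species_productive_cone Sm Sp AC RA =
     {y. \<exists>w::'r \<Rightarrow> real.
          (\<forall>c\<in>AC. (\<Sum>r\<in>RA. stoich Sm Sp c r * w r) \<ge> 0) \<and>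
          y = (\<lambda>s. if s \<in> mas_species Sm Sp RA then (\<Sum>r\<in>RA. stoich Sm Sp s r * w r) else 0)}"

end

theory Submission
  imports Defs "HOL-Analysis.Analysis"
begin


lemma vec_expand_on:
  fixes z :: "real ^ 's::finite"
  assumes "\<forall>c. c \<notin> A \<longrightarrow> z $ c = 0"
  shows "z = (\<Sum>c\<in>A. z $ c *\<^sub>R axis c 1)"
proof -
  have "z $ i = (\<Sum>c\<in>A. z $ c *\<^sub>R axis c 1) $ i" for i
  proof -
    have "(\<Sum>c\<in>A. z $ c *\<^sub>R axis c 1) $ i = (if i \<in> A then z $ i else 0)"
      by (simp add: sum_component axis_def if_distrib sum.delta sum.delta' cong: if_cong)
    also have "\<dots> = z $ i" using assms by simp
    finally show ?thesis by simp
  qed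
  then show ?thesis by (subst vec_eq_iff) blast
qed

lemma surj_from_inj:
  fixes A :: "'s::finite set" and R :: "'r set" and S :: "'s \<Rightarrow> 'r \<Rightarrow> real"
  assumes finR: "finite R" and card: "card A \<le> card R"
    and inj: "\<forall>w. (\<forall>c\<in>A. (\<Sum>r\<in>R. S c r * w r) = 0) \<longrightarrow> (\<forall>r\<in>R. w r = 0)"
  shows "\<exists>w. \<forall>c\<in>A. (\<Sum>r\<in>R. S c r * w r) = u c"
proof -
  define col :: "'r \<Rightarrow> real ^ 's" where "col r = (\<chi> c. if c \<in> A then S c r else 0)" for r
  define W where "W = (\<lambda>c. axis c (1::real)) ` A"
  define C where "C = col ` R"
  have colinj: "inj_on col R"
  proof (rule inj_onI, rule ccontr)
    fix r1 r2 assume r: "r1 \<in> R" "r2 \<in> R" "col r1 = col r2" "r1 \<noteq> r2"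
    define w where "w r = (if r = r1 then 1 else if r = r2 then -1 else (0::real))" for r
    have "\<forall>c\<in>A. (\<Sum>r\<in>R. S c r * w r) = 0"
    proof
      fix c assume c: "c \<in> A"
      have e: "S c r1 = S c r2" using r(3) c unfolding col_def by (metis (mono_tags) vec_lambda_beta)
      have "(\<Sum>r\<in>R. S c r * w r) = (\<Sum>r\<in>R. (if r = r1 then S c r1 else 0) - (if r = r2 then S c r2 else 0))"
        by (rule sum.cong) (auto simp: w_def r(4))
      also have "\<dots> = 0" using r e finR by (simp add: sum_subtractf sum.delta)
      finally show "(\<Sum>r\<in>R. S c r * w r) = 0" .
    qed
    then have "w r1 = 0" using inj r by blast
    then show False by (simp add: w_def)
  qed
  have indep: "independent C"
  proof
    assume "dependent C"
    then obtain a where a: "\<exists>v\<in>C. a v \<noteq> 0" "(\<Sum>v\<in>C. a v *\<^sub>R v) = 0"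
      using dependent_finite[of C] finR C_def by auto
    have "(\<Sum>v\<in>C. a v *\<^sub>R v) = (\<Sum>r\<in>R. a (col r) *\<^sub>R col r)"
      unfolding C_def by (rule sum.reindex[OF colinj, unfolded comp_def])
    then have z: "(\<Sum>r\<in>R. a (col r) *\<^sub>R col r) = 0" using a by simp
    have "\<forall>c\<in>A. (\<Sum>r\<in>R. S c r * a (col r)) = 0"
    proof
      fix c assume c: "c \<in> A"
      have "0 = (\<Sum>r\<in>R. a (col r) *\<^sub>R col r) $ c" using z by simp
      also have "\<dots> = (\<Sum>r\<in>R. S c r * a (col r))"
        using c by (simp add: sum_component col_def mult.commute)
      finally show "(\<Sum>r\<in>R. S c r * a (col r)) = 0" by simp
    qed
    then have "\<forall>r\<in>R. a (col r) = 0" using inj[rule_format, of "\<lambda>r. a (col r)"] by blast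
    then show False using a C_def by auto
  qed
  have CW: "C \<subseteq> span W"
  proof
    fix b assume "b \<in> C"
    then obtain r where b: "b = col r" by (auto simp: C_def)
    have "b = (\<Sum>c\<in>A. b $ c *\<^sub>R axis c 1)"
      by (rule vec_expand_on) (simp add: b col_def)
    also have "\<dots> \<in> span W"
      by (rule span_sum, rule span_mul, rule span_base) (simp add: W_def)
    finally show "b \<in> span W" .
  qed
  have "dim (span W) \<le> card W" by (rule dim_le_card) (auto simp: W_def)
  also have "\<dots> \<le> card A" unfolding W_def by (rule card_image_le) simp
  also have "\<dots> \<le> card C" using card colinj by (simp add: C_def card_image)
  finally have "span W \<subseteq> span C"
    using card_ge_dim_independent[of C "span W"] indep CW by (simp add: span_span)
  define z :: "real ^ 's" where "z = (\<chi> c. if c \<in> A then u c else 0)"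
  have "z = (\<Sum>c\<in>A. z $ c *\<^sub>R axis c 1)"
    by (rule vec_expand_on) (simp add: z_def)
  also have "\<dots> \<in> span W"
    by (rule span_sum, rule span_mul, rule span_base) (simp add: W_def)
  finally have "z \<in> span C" using \<open>span W \<subseteq> span C\<close> by blast
  then obtain a where a: "z = (\<Sum>v\<in>C. a v *\<^sub>R v)"
    using span_finite[of C] finR C_def by auto
  also have "\<dots> = (\<Sum>r\<in>R. a (col r) *\<^sub>R col r)"
    unfolding C_def by (rule sum.reindex[OF colinj, unfolded comp_def])
  finally have za: "z = (\<Sum>r\<in>R. a (col r) *\<^sub>R col r)" .
  show ?thesis
  proof (intro exI ballI)
    fix c assume c: "c \<in> A"
    have "u c = z $ c" using c by (simp add: z_def)
    also have "\<dots> = (\<Sum>r\<in>R. S c r * a (col r))"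
      using c by (simp add: za sum_component col_def mult.commute)
    finally show "(\<Sum>r\<in>R. S c r * a (col r)) = u c" by simp
  qed
qed


lemma cone_gen_sum:
  fixes g :: "'i \<Rightarrow> 's \<Rightarrow> real"
  assumes "finite B" "finite I" "g ` I \<subseteq> B" "\<forall>i\<in>I. l i \<ge> 0"
  shows "(\<lambda>s. \<Sum>i\<in>I. l i * g i s) \<in> cone_gen B"
proof -
  define c where "c b = (\<Sum>i\<in>I. if g i = b then l i else 0)" for b
  have "(\<Sum>b\<in>B. c b * b s) = (\<Sum>i\<in>I. l i * g i s)" for s
  proof -
    have "(\<Sum>b\<in>B. c b * b s) = (\<Sum>b\<in>B. \<Sum>i\<in>I. if g i = b then l i * g i s else 0)"
      unfolding c_def sum_distrib_right by (intro sum.cong) auto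
    also have "\<dots> = (\<Sum>i\<in>I. \<Sum>b\<in>B. if g i = b then l i * g i s else 0)"
      by (rule sum.swap)
    also have "\<dots> = (\<Sum>i\<in>I. l i * g i s)"
      using assms(1,3) by (intro sum.cong) (auto simp: sum.delta)
    finally show ?thesis .
  qed
  moreover have "\<forall>b\<in>B. c b \<ge> 0" unfolding c_def using assms(4) by (auto intro!: sum_nonneg)
  ultimately show ?thesis unfolding cone_gen_def by auto
qed

lemma core_inj:
  fixes Sm Sp :: "'s::finite \<Rightarrow> 'r::finite \<Rightarrow> nat"
  assumes core: "autocatalytic_core Sm Sp AC RA"
  shows "\<forall>w. (\<forall>c\<in>AC. (\<Sum>r\<in>RA. stoich Sm Sp c r * w r) = 0) \<longrightarrow> (\<forall>r\<in>RA. w r = 0)"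
proof (rule ccontr)
  let ?S = "stoich Sm Sp"
  assume "\<not> ?thesis"
  then obtain u r0 where hu: "\<forall>c\<in>AC. (\<Sum>r\<in>RA. ?S c r * u r) = 0" and r0: "r0 \<in> RA" "u r0 \<noteq> 0"
    by blast
  have ex: "excl_autocatalytic Sm Sp AC RA" using core unfolding autocatalytic_core_def by blast
  then obtain v where vpos: "\<forall>r\<in>RA. v r > 0" and vS: "\<forall>m\<in>AC. (\<Sum>r\<in>RA. ?S m r * v r) > 0"
    unfolding excl_autocatalytic_def by blast
  have ACne: "AC \<noteq> {}" and ii: "\<forall>m\<in>AC. \<exists>r\<in>RA. Sm m r > 0" and iii: "\<forall>r\<in>RA. \<exists>m\<in>AC. Sm m r > 0"
    using ex unfolding excl_autocatalytic_def by blast+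
  obtain u' where hu': "\<forall>c\<in>AC. (\<Sum>r\<in>RA. ?S c r * u' r) = 0" and neg: "\<exists>r\<in>RA. u' r < 0"
  proof (cases "u r0 < 0")
    case True then show ?thesis using that hu r0 by blast
  next
    case False
    have "\<forall>c\<in>AC. (\<Sum>r\<in>RA. ?S c r * (- u r)) = 0" using hu by (simp add: sum_negf)
    moreover have "- u r0 < 0" using False r0 by simp
    ultimately show ?thesis using that[of "\<lambda>r. - u r"] r0 by blast
  qed
  define N where "N = {r\<in>RA. u' r < 0}"
  have Nfin: "finite N" and Nne: "N \<noteq> {}" using neg by (auto simp: N_def)
  define t where "t = Min ((\<lambda>r. v r / - u' r) ` N)"
  have "t \<in> (\<lambda>r. v r / - u' r) ` N" unfolding t_def using Nfin Nne by (intro Min_in) auto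
  then obtain r1 where r1: "r1 \<in> N" "t = v r1 / - u' r1" by blast
  have tle: "t \<le> v r / - u' r" if "r \<in> N" for r
    using Min_le[of "(\<lambda>r. v r / - u' r) ` N"] Nfin that unfolding t_def by auto
  have tpos: "t > 0"
  proof -
    have "v r1 > 0" "- u' r1 > 0" using r1 vpos by (auto simp: N_def)
    then show ?thesis using r1(2) by (metis divide_pos_pos)
  qed
  define v' where "v' r = v r + t * u' r" for r
  have v'nn: "v' r \<ge> 0" if "r \<in> RA" for r
  proof (cases "u' r < 0")
    case True
    then have "r \<in> N" using that by (simp add: N_def)
    then have "t \<le> v r / - u' r" by (rule tle)
    moreover have p: "- u' r > 0" using True by simp
    ultimately have "t * - u' r \<le> v r" using pos_le_divide_eq[OF p] by blast
    then show ?thesis by (simp add: v'_def)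
  next
    case False
    then have "t * u' r \<ge> 0" using tpos by simp
    moreover have "v r > 0" using vpos that by blast
    ultimately show ?thesis by (simp add: v'_def)
  qed
  have v'r1: "v' r1 = 0" using r1 by (auto simp: v'_def N_def field_simps)
  have v'S: "(\<Sum>r\<in>RA. ?S m r * v' r) = (\<Sum>r\<in>RA. ?S m r * v r)" if "m \<in> AC" for m
  proof -
    have "(\<Sum>r\<in>RA. ?S m r * v' r) = (\<Sum>r\<in>RA. ?S m r * v r) + t * (\<Sum>r\<in>RA. ?S m r * u' r)"
      by (simp add: v'_def algebra_simps sum.distrib sum_distrib_left)
    then show ?thesis using hu' that by simp
  qed
  define R' where "R' = {r\<in>RA. v' r > 0}"
  define M' where "M' = {m\<in>AC. \<exists>r\<in>R'. Sm m r > 0}"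
  have sumR': "(\<Sum>r\<in>R'. ?S m r * v' r) = (\<Sum>r\<in>RA. ?S m r * v' r)" for m
    by (rule sum.mono_neutral_left) (use v'nn in \<open>auto simp: R'_def less_le\<close>)
  have R'ne: "R' \<noteq> {}"
  proof
    assume "R' = {}"
    obtain c where c: "c \<in> AC" using ACne by blast
    have "(\<Sum>r\<in>R'. ?S c r * v' r) > 0" using sumR' v'S[OF c] vS c by simp
    then show False using \<open>R' = {}\<close> by simp
  qed
  have M'ne: "M' \<noteq> {}"
  proof -
    obtain r where r: "r \<in> R'" using R'ne by blast
    then obtain m where "m \<in> AC" "Sm m r > 0" using iii by (auto simp: R'_def)
    then show ?thesis using r by (auto simp: M'_def)
  qed
  have "excl_autocatalytic Sm Sp M' R'"
    unfolding excl_autocatalytic_def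
  proof (intro conjI)
    show "\<exists>v. (\<forall>r\<in>R'. 0 < v r) \<and> (\<forall>m\<in>M'. 0 < (\<Sum>r\<in>R'. ?S m r * v r))"
      by (rule exI[of _ v']) (use sumR' v'S vS in \<open>auto simp: R'_def M'_def\<close>)
    show "\<forall>m\<in>M'. \<exists>r\<in>R'. 0 < Sm m r" by (auto simp: M'_def)
    show "\<forall>r\<in>R'. \<exists>m\<in>M'. 0 < Sm m r"
    proof
      fix r assume r: "r \<in> R'"
      then obtain m where "m \<in> AC" "Sm m r > 0" using iii by (auto simp: R'_def)
      then show "\<exists>m\<in>M'. 0 < Sm m r" using r by (auto simp: M'_def)
    qed
  qed (use M'ne R'ne in auto)
  moreover have "M' \<subseteq> AC" "R' \<subseteq> RA" by (auto simp: M'_def R'_def)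
  moreover have "r1 \<in> RA" "r1 \<notin> R'" using r1 v'r1 by (auto simp: R'_def N_def)
  then have "(M', R') \<noteq> (AC, RA)" by blast
  ultimately show False using core unfolding autocatalytic_core_def by blast
qed

lemma core_card:
  fixes Sm Sp :: "'s::finite \<Rightarrow> 'r::finite \<Rightarrow> nat"
  assumes core: "autocatalytic_core Sm Sp AC RA"
  shows "card AC \<le> card RA"
proof -
  let ?S = "stoich Sm Sp"
  have ex: "excl_autocatalytic Sm Sp AC RA" using core unfolding autocatalytic_core_def by blast
  then obtain v where vpos: "\<forall>r\<in>RA. v r > 0" and vS: "\<forall>m\<in>AC. (\<Sum>r\<in>RA. ?S m r * v r) > 0"
    unfolding excl_autocatalytic_def by blast
  have ACne: "AC \<noteq> {}" and RAne: "RA \<noteq> {}" and ii: "\<forall>m\<in>AC. \<exists>r\<in>RA. Sm m r > 0"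
    and iii: "\<forall>r\<in>RA. \<exists>m\<in>AC. Sm m r > 0"
    using ex unfolding excl_autocatalytic_def by blast+
  show ?thesis
  proof (cases "\<forall>m\<in>AC. \<exists>r\<in>RA. Sm m r > 0 \<and> (\<forall>m'\<in>AC. m' \<noteq> m \<longrightarrow> Sm m' r = 0)")
    case True
    then obtain p where p: "\<forall>m\<in>AC. p m \<in> RA \<and> Sm m (p m) > 0 \<and> (\<forall>m'\<in>AC. m' \<noteq> m \<longrightarrow> Sm m' (p m) = 0)"
      by metis
    have "inj_on p AC"
    proof (rule inj_onI, rule ccontr)
      fix m1 m2 assume h: "m1 \<in> AC" "m2 \<in> AC" "p m1 = p m2" "m1 \<noteq> m2"
      then have "Sm m2 (p m1) = 0" using p by metis
      moreover have "Sm m2 (p m2) > 0" using p h by blast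
      ultimately show False using h by simp
    qed
    moreover have "p ` AC \<subseteq> RA" using p by blast
    ultimately show ?thesis by (intro card_inj_on_le) auto
  next
    case False
    then obtain m where m: "m \<in> AC"
      and hm0: "\<not> (\<exists>r\<in>RA. Sm m r > 0 \<and> (\<forall>m'\<in>AC. m' \<noteq> m \<longrightarrow> Sm m' r = 0))"
      by blast
    have hm: "\<forall>r\<in>RA. Sm m r > 0 \<longrightarrow> (\<exists>m'\<in>AC. m' \<noteq> m \<and> Sm m' r > 0)"
      using hm0 by auto
    have ne: "AC - {m} \<noteq> {}"
    proof
      assume e: "AC - {m} = {}"
      obtain r where r: "r \<in> RA" using RAne by blast
      then obtain m1 where "m1 \<in> AC" "Sm m1 r > 0" using iii by blast
      then have "m1 = m" using e by blast
      then obtain m' where "m' \<in> AC" "m' \<noteq> m" using hm r \<open>Sm m1 r > 0\<close> by blast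
      then show False using e by blast
    qed
    have "excl_autocatalytic Sm Sp (AC - {m}) RA"
      unfolding excl_autocatalytic_def
    proof (intro conjI)
      show "\<exists>v. (\<forall>r\<in>RA. 0 < v r) \<and> (\<forall>ma\<in>AC - {m}. 0 < (\<Sum>r\<in>RA. ?S ma r * v r))"
        using vpos vS by blast
      show "\<forall>ma\<in>AC - {m}. \<exists>r\<in>RA. 0 < Sm ma r" using ii by blast
      show "\<forall>r\<in>RA. \<exists>ma\<in>AC - {m}. 0 < Sm ma r"
      proof
        fix r assume r: "r \<in> RA"
        then obtain m1 where m1: "m1 \<in> AC" "Sm m1 r > 0" using iii by blast
        show "\<exists>ma\<in>AC - {m}. 0 < Sm ma r"
        proof (cases "m1 = m")
          case True then show ?thesis using hm r m1 by blast
        next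
          case False then show ?thesis using m1 by blast
        qed
      qed
    qed (use ne RAne in auto)
    moreover have "(AC - {m}, RA) \<noteq> (AC, RA)" using m by auto
    ultimately have False using core unfolding autocatalytic_core_def by blast
    then show ?thesis ..
  qed
qed



theorem mainTheorem10:
  fixes Sm Sp :: "'s::finite \<Rightarrow> 'r::finite \<Rightarrow> nat"
    and AC :: "'s set" and RA :: "'r set"
  assumes "\<exists>x. conservation_law Sm Sp x \<and> (\<forall>s. x s > 0)"
    and "autocatalytic_core Sm Sp AC RA"
    and "\<forall>M. autocatalytic_core Sm Sp M RA \<longrightarrow> M = AC"
    and "card (mas_species Sm Sp RA) = card AC + 1"
  shows "species_productive_cone Sm Sp AC RA = partition_productive_cone Sm Sp AC RA"
proof -
  let ?S = "stoich Sm Sp"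
  define SA where "SA = mas_species Sm Sp RA"
  define B where "B = partition_basis Sm Sp AC RA"
  obtain xp where xp: "conservation_law Sm Sp xp" "\<forall>s. xp s > 0" using assms(1) by blast
  have core: "autocatalytic_core Sm Sp AC RA" by (rule assms(2))
  have ex: "excl_autocatalytic Sm Sp AC RA" using core unfolding autocatalytic_core_def by blast
  then obtain v where vpos: "\<forall>r\<in>RA. v r > 0" and vS: "\<forall>m\<in>AC. (\<Sum>r\<in>RA. ?S m r * v r) > 0"
    unfolding excl_autocatalytic_def by blast
  have ACne: "AC \<noteq> {}" and ii: "\<forall>m\<in>AC. \<exists>r\<in>RA. Sm m r > 0"
    using ex unfolding excl_autocatalytic_def by blast+
  have ACsub: "AC \<subseteq> SA" using ii by (auto simp: SA_def mas_species_def)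
  have "card (SA - AC) = 1" using assms(4) ACsub by (simp add: SA_def card_Diff_subset)
  then obtain s0 where s0: "SA - AC = {s0}" by (rule card_1_singletonE)
  have s0SA: "s0 \<in> SA" and s0AC: "s0 \<notin> AC" using s0 by auto
  have SAeq: "SA = insert s0 AC" using s0 ACsub by blast
  have zero: "?S s r = 0" if "s \<notin> SA" "r \<in> RA" for s r
    using that by (auto simp: SA_def mas_species_def stoich_def)
  have consSA: "(\<Sum>s\<in>SA. x s * ?S s r) = 0" if "conservation_law Sm Sp x" "r \<in> RA" for x r
  proof -
    have "(\<Sum>s\<in>SA. x s * ?S s r) = (\<Sum>s\<in>UNIV. x s * ?S s r)"
      by (rule sum.mono_neutral_left) (use zero that in auto)
    then show ?thesis using that unfolding conservation_law_def by simp
  qed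
  have orth: "(\<Sum>s\<in>SA. x s * (\<Sum>r\<in>RA. ?S s r * w r)) = 0" if "conservation_law Sm Sp x" for x w
  proof -
    have "(\<Sum>s\<in>SA. x s * (\<Sum>r\<in>RA. ?S s r * w r)) = (\<Sum>r\<in>RA. w r * (\<Sum>s\<in>SA. x s * ?S s r))"
      by (simp add: sum_distrib_left sum_distrib_right sum.swap[of _ SA] algebra_simps)
    also have "\<dots> = 0" using consSA[OF that] by simp
    finally show ?thesis .
  qed
  have splitSA: "(\<Sum>s\<in>SA. f s) = f s0 + (\<Sum>s\<in>AC. f s)" for f :: "'s \<Rightarrow> real"
    using SAeq s0AC by simp
  have key: "xp s0 * (\<Sum>r\<in>RA. ?S s0 r * w r) = - (\<Sum>c\<in>AC. xp c * (\<Sum>r\<in>RA. ?S c r * w r))" for w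
    using orth[OF xp(1), of w] splitSA by simp
  have Cnotfood: "c \<notin> food_set Sm Sp RA" if "c \<in> AC" for c
  proof
    assume "c \<in> food_set Sm Sp RA"
    then have "\<forall>r\<in>RA. ?S c r \<le> 0" by (simp add: food_set_def)
    then have "(\<Sum>r\<in>RA. ?S c r * v r) \<le> 0" using vpos
      by (intro sum_nonpos) (simp add: mult_nonpos_nonneg less_imp_le)
    then show False using vS that by force
  qed
  have s0neg: "\<exists>r\<in>RA. ?S s0 r < 0"
  proof (rule ccontr)
    assume "\<not> ?thesis"
    then have "(\<Sum>r\<in>RA. ?S s0 r * v r) \<ge> 0" using vpos
      by (intro sum_nonneg) (simp add: not_less less_imp_le)
    then have "xp s0 * (\<Sum>r\<in>RA. ?S s0 r * v r) \<ge> 0" using xp(2) by (meson less_imp_le mult_nonneg_nonneg)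
    moreover have "(\<Sum>c\<in>AC. xp c * (\<Sum>r\<in>RA. ?S c r * v r)) > 0"
      using ACne vS xp(2) by (intro sum_pos) auto
    ultimately show False using key[of v] by simp
  qed
  have s0B: "- unit_vec s0 \<in> B"
  proof (cases "\<forall>r\<in>RA. ?S s0 r \<le> 0")
    case True
    then have "s0 \<in> food_set Sm Sp RA" using s0SA by (simp add: food_set_def SA_def)
    then show ?thesis by (auto simp: B_def partition_basis_def)
  next
    case False
    then have "s0 \<in> member_set Sm Sp RA - AC" using s0SA s0AC s0neg
      by (auto simp: member_set_def SA_def not_le)
    then show ?thesis by (auto simp: B_def partition_basis_def)
  qed
  have Bform: "\<exists>s\<in>SA. b = unit_vec s \<or> b = - unit_vec s" if "b \<in> B" for b
    using that ACsub
    by (auto simp: B_def partition_basis_def food_set_def waste_set_def member_set_def SA_def)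
  have finite_Bv: "finite B"
  proof (rule finite_subset)
    show "B \<subseteq> (\<lambda>s. unit_vec s) ` SA \<union> (\<lambda>s. - unit_vec s) ` SA" using Bform by blast
  qed simp
  have BAC: "b c \<ge> 0" if "b \<in> B" "c \<in> AC" for b c
    using that Cnotfood
    by (auto simp: B_def partition_basis_def unit_vec_def)
  show ?thesis
  proof
    show "species_productive_cone Sm Sp AC RA \<subseteq> partition_productive_cone Sm Sp AC RA"
    proof
      fix y assume "y \<in> species_productive_cone Sm Sp AC RA"
      then obtain w where w: "\<forall>c\<in>AC. (\<Sum>r\<in>RA. ?S c r * w r) \<ge> 0"
        and y: "y = (\<lambda>s. if s \<in> SA then (\<Sum>r\<in>RA. ?S s r * w r) else 0)"
        unfolding species_productive_cone_def SA_def by blast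
      have o: "\<forall>x. conservation_law Sm Sp x \<longrightarrow> (\<Sum>s\<in>SA. x s * y s) = 0"
        using orth by (simp add: y)
      have ys0: "y s0 \<le> 0"
      proof -
        have "(\<Sum>c\<in>AC. xp c * (\<Sum>r\<in>RA. ?S c r * w r)) \<ge> 0"
          using w xp(2) by (intro sum_nonneg) (simp add: less_imp_le)
        then have "xp s0 * y s0 \<le> 0" using key[of w] s0SA by (simp add: y)
        then show ?thesis using xp(2) by (simp add: mult_le_0_iff) (meson not_le)
      qed
      define g where "g s = (if s = s0 then - unit_vec s0 else unit_vec s)" for s
      define l where "l s = (if s = s0 then - y s0 else y s)" for s
      have "(\<lambda>s. \<Sum>i\<in>SA. l i * g i s) \<in> cone_gen B"
      proof (rule cone_gen_sum)
        show "finite B" by (rule finite_Bv)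
        show "finite SA" by simp
        show "g ` SA \<subseteq> B"
        proof
          fix b assume "b \<in> g ` SA"
          then obtain s where s: "s \<in> SA" "b = g s" by blast
          show "b \<in> B"
          proof (cases "s = s0")
            case True then show ?thesis using s s0B by (simp add: g_def)
          next
            case False then have "s \<in> AC" using s SAeq by auto
            then show ?thesis using s False by (auto simp: g_def B_def partition_basis_def)
          qed
        qed
        show "\<forall>i\<in>SA. 0 \<le> l i"
          using w ys0 SAeq by (auto simp: l_def y)
      qed
      moreover have "(\<lambda>s. \<Sum>i\<in>SA. l i * g i s) = y"
      proof
        fix s
        have "(\<Sum>i\<in>SA. l i * g i s) = (\<Sum>i\<in>SA. if s = i then y i else 0)"
          by (intro sum.cong) (auto simp: l_def g_def unit_vec_def)
        also have "\<dots> = y s" by (simp add: y)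
        finally show "(\<Sum>i\<in>SA. l i * g i s) = y s" .
      qed
      ultimately show "y \<in> partition_productive_cone Sm Sp AC RA"
        using o unfolding partition_productive_cone_def B_def SA_def by auto
    qed
  next
    show "partition_productive_cone Sm Sp AC RA \<subseteq> species_productive_cone Sm Sp AC RA"
    proof
      fix y assume "y \<in> partition_productive_cone Sm Sp AC RA"
      then obtain cb where cb: "\<forall>b\<in>B. cb b \<ge> 0" and y: "y = (\<lambda>s. \<Sum>b\<in>B. cb b * b s)"
        and o: "\<forall>x. conservation_law Sm Sp x \<longrightarrow> (\<Sum>s\<in>SA. x s * y s) = 0"
        unfolding partition_productive_cone_def cone_gen_def B_def SA_def by blast
      have yout: "y s = 0" if "s \<notin> SA" for s
      proof -
        have "\<forall>b\<in>B. b s = 0"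
        proof
          fix b assume "b \<in> B"
          then obtain s' where "s' \<in> SA" "b = unit_vec s' \<or> b = - unit_vec s'" using Bform by blast
          then show "b s = 0" using that by (auto simp: unit_vec_def)
        qed
        then show ?thesis unfolding y by (intro sum.neutral) simp
      qed
      have yAC: "y c \<ge> 0" if "c \<in> AC" for c
        unfolding y using cb BAC that by (auto intro!: sum_nonneg)
      obtain w where w: "\<forall>c\<in>AC. (\<Sum>r\<in>RA. ?S c r * w r) = y c"
        using surj_from_inj[of RA AC ?S y] core_inj[OF core] core_card[OF core] by auto
      have "y = (\<lambda>s. if s \<in> SA then (\<Sum>r\<in>RA. ?S s r * w r) else 0)"
      proof
        fix s
        show "y s = (if s \<in> SA then (\<Sum>r\<in>RA. ?S s r * w r) else 0)"
        proof (cases "s \<in> SA")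
          case False then show ?thesis using yout by simp
        next
          case True
          show ?thesis
          proof (cases "s = s0")
            case False then show ?thesis using True w SAeq by auto
          next
            case s: True
            have "xp s0 * y s0 = - (\<Sum>c\<in>AC. xp c * y c)"
              using o xp(1) splitSA[of "\<lambda>s. xp s * y s"] by simp
            also have "\<dots> = xp s0 * (\<Sum>r\<in>RA. ?S s0 r * w r)"
              using key[of w] w by simp
            finally have "y s0 = (\<Sum>r\<in>RA. ?S s0 r * w r)" using xp(2)
              by (metis less_irrefl mult_left_cancel)
            then show ?thesis using s True by simp
          qed
        qed
      qed
      then show "y \<in> species_productive_cone Sm Sp AC RA"
        unfolding species_productive_cone_def SA_def[symmetric] using w yAC by auto
    qed
  qed
qed

end
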